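(* For integers $2\leq n\leq\ell$ and $1\leq k\leq n-1$, let $\mathcal{S}_\ell(n,k)$ denote the set of permutations of $[\ell]$ with exactly $\ell-n$ fixed points and exactly $k$ exceedances. Then $|\mathcal{S}_\ell(n,k)|\leq\binom{\ell}{n}\cdot\theta(n,k)$, where \[\theta(n,k)=\begin{cases}1&\text{if }k=1\text{ or }k=n-1,\\ (2k+3)^n&\text{if }2\leq k<n/2,\\ (2n-2k+5)^n&\text{if }n/2\leq k\leq n-2.\end{cases}\]
   Context: A fixed point of a permutation $\sigma$ of $[\ell]$ is an $i$ with $\sigma(i)=i$; an exceedance is an index $i$ with $\sigma(i)>i$, and the number of exceedances of $\sigma$ is $|\{i:\sigma(i)>i\}|$. *)

theory Defs
  imports "HOL-Combinatorics.Permutations"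
begin

definition fixed_points :: "(nat \<Rightarrow> nat) \<Rightarrow> nat \<Rightarrow> nat set" where
  "fixed_points \<sigma> l = {i \<in> {1..l}. \<sigma> i = i}"

definition exceedances :: "(nat \<Rightarrow> nat) \<Rightarrow> nat \<Rightarrow> nat set" where
  "exceedances \<sigma> l = {i \<in> {1..l}. \<sigma> i > i}"

definition S_set :: "nat \<Rightarrow> nat \<Rightarrow> nat \<Rightarrow> (nat \<Rightarrow> nat) set" where
  "S_set l n k = {\<sigma>. \<sigma> permutes {1..l} \<and> card (fixed_points \<sigma> l) = l - n
                     \<and> card (exceedances \<sigma> l) = k}"

definition theta :: "nat \<Rightarrow> nat \<Rightarrow> nat" where
  "theta n k = (if k = 1 \<or> k = n - 1 then 1
               else if 2 \<le> k \<and> 2 * k < n then (2 * k + 3) ^ n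
               else (2 * n - 2 * k + 5) ^ n)"

end

theory Submission imports Defs begin
definition B :: "nat \<Rightarrow> nat \<Rightarrow> nat" where
  "B n k = (if k = 0 then (if n = 0 then 1 else 0) else if n \<le> k then 0
            else if k = 1 \<or> k = n - 1 then 1 else min ((2*k+3)^n) ((2*(n-k)+5)^n))"

lemma B_bound: assumes "1 \<le> k" shows "B n k \<le> (2*k+3)^n" "B n k \<le> (2*(n-k)+5)^n"
proof -
  have "1 \<le> (2*k+3)^n" "1 \<le> (2*(n-k)+5)^n" by simp_all
  then show "B n k \<le> (2*k+3)^n" "B n k \<le> (2*(n-k)+5)^n" using assms
    by (auto simp: B_def)
qed

lemma bern: "(a::nat)^(Suc n) + Suc n * d * a^n \<le> (a+d)^(Suc n)"
proof (induction n)
  case 0 then show ?case by simp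
next
  case (Suc n)
  have "a^(Suc (Suc n)) + Suc (Suc n) * d * a^(Suc n)
      = a * (a^(Suc n) + Suc n * d * a^n) + d * a^(Suc n)" by (simp add: algebra_simps)
  also have "\<dots> \<le> a * (a+d)^(Suc n) + d * (a+d)^(Suc n)"
    using Suc.IH by (intro add_mono mult_le_mono2 power_mono) auto
  also have "\<dots> = (a+d)^(Suc(Suc n))" by (simp add: algebra_simps)
  finally show ?case .
qed

lemma I1:
  fixes m k :: nat
  shows "Suc k * (2*(Suc k)+3)^(Suc m) + (Suc m - k) * (2*k+3)^(Suc m) + Suc m * (2*k+3)^m
         \<le> (2*(Suc k)+3)^(Suc (Suc m))"
proof -
  define a where "a = 2*k+3"
  define P where "P = a^m"
  define Q where "Q = (a+2)^(Suc m)"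
  have b: "2*(Suc k)+3 = a+2" by (simp add: a_def)
  have hQ: "a * P + Suc m * 2 * P \<le> Q" using bern[of a m 2] by (simp add: P_def Q_def)
  have "Suc k * Q + (Suc m - k) * (a*P) + Suc m * P \<le> Suc k * Q + (k+4) * Q"
  proof -
    have "(Suc m - k) * (a*P) + Suc m * P \<le> (k+4) * (a * P + Suc m * 2 * P)"
    proof -
      have c: "(Suc m - k) * a + Suc m \<le> (k+4) * a + (k+4) * (Suc m * 2)"
      proof -
        have "(Suc m - k) * a \<le> Suc m * a" by (intro mult_le_mono1) simp
        moreover have "Suc m * a + Suc m \<le> (k+4) * (Suc m * 2)" by (simp add: a_def algebra_simps)
        ultimately show ?thesis by linarith
      qed
      have "(Suc m - k) * (a*P) + Suc m * P = ((Suc m - k) * a + Suc m) * P" by (simp add: algebra_simps)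
      also have "\<dots> \<le> ((k+4) * a + (k+4) * (Suc m * 2)) * P" using c by (intro mult_le_mono1)
      also have "\<dots> = (k+4) * (a * P + Suc m * 2 * P)" by (simp add: algebra_simps)
      finally show ?thesis .
    qed
    also have "\<dots> \<le> (k+4) * Q" using hQ by simp
    finally show ?thesis by simp
  qed
  also have "\<dots> = (a+2) * Q" by (simp add: a_def algebra_simps)
  finally show ?thesis unfolding b by (simp add: P_def Q_def a_def)
qed

lemma I2:
  fixes m k :: nat
  assumes "k < m"
  shows "Suc k * (2*(m-k)+5)^(Suc m) + (Suc m - k) * (2*(m-k)+7)^(Suc m)
         + Suc m * (2*(m-k)+5)^m
         \<le> (2*(m-k)+7)^(Suc (Suc m))"
proof -
  define d where "d = m - k"
  have md: "m = k + d" "1 \<le> d" using assms by (auto simp: d_def)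
  define c where "c = 2*d+5"
  define P where "P = c^m"
  define Q where "Q = (c+2)^(Suc m)"
  have e1: "2*(m-k)+5 = c" using md by (simp add: c_def)
  have e2: "2*(m-k)+7 = c+2" using md by (simp add: c_def)
  have e4: "Suc m - k = d + 1" using md by simp
  have hQ: "c * P + Suc m * 2 * P \<le> Q" using bern[of c m 2] by (simp add: P_def Q_def)
  have "Suc k * (c*P) + Suc m * P \<le> (d+6) * (c * P + Suc m * 2 * P)"
  proof -
    have co: "Suc k * c + Suc m \<le> (d+6) * c + (d+6) * (Suc m * 2)"
      by (simp add: md c_def algebra_simps)
    have "Suc k * (c*P) + Suc m * P = (Suc k * c + Suc m) * P" by (simp add: algebra_simps)
    also have "\<dots> \<le> ((d+6) * c + (d+6) * (Suc m * 2)) * P" using co by (intro mult_le_mono1)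
    also have "\<dots> = (d+6) * (c * P + Suc m * 2 * P)" by (simp add: algebra_simps)
    finally show ?thesis .
  qed
  also have "\<dots> \<le> (d+6) * Q" using hQ by (intro mult_le_mono2)
  finally have "Suc k * (c*P) + (d+1) * Q + Suc m * P \<le> (c+2) * Q"
    by (simp add: c_def algebra_simps)
  then show ?thesis unfolding e1 e2 e4 by (simp add: P_def Q_def)
qed

lemma star_x:
  "Suc k * B (Suc m) (Suc k) + (Suc m - k) * B (Suc m) k + Suc m * B m k \<le> B (Suc (Suc m)) (Suc k)"
proof -
  consider "Suc m \<le> k" | "k = 0" | "k = m" "1 \<le> m" | "1 \<le> k" "k < m" by linarith
  then show ?thesis
  proof cases
    case 1 then show ?thesis by (simp add: B_def)
  next
    case 2 then show ?thesis by (cases m) (auto simp: B_def)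
  next
    case 3 then show ?thesis by (simp add: B_def)
  next
    case 4
    have v: "B (Suc (Suc m)) (Suc k) = min ((2*(Suc k)+3)^(Suc (Suc m))) ((2*(Suc (Suc m) - Suc k)+5)^(Suc (Suc m)))"
      using 4 by (simp add: B_def)
    have l1: "Suc k * B (Suc m) (Suc k) + (Suc m - k) * B (Suc m) k + Suc m * B m k \<le> (2*(Suc k)+3)^(Suc (Suc m))"
    proof -
      have "Suc k * B (Suc m) (Suc k) + (Suc m - k) * B (Suc m) k + Suc m * B m k
        \<le> Suc k * (2*(Suc k)+3)^(Suc m) + (Suc m - k) * (2*k+3)^(Suc m) + Suc m * (2*k+3)^m"
        using 4 by (intro add_mono mult_le_mono2 B_bound) auto
      then show ?thesis using I1[of k m] by linarith
    qed
    have l2: "Suc k * B (Suc m) (Suc k) + (Suc m - k) * B (Suc m) k + Suc m * B m k \<le> (2*(Suc (Suc m) - Suc k)+5)^(Suc (Suc m))"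
    proof -
      have "Suc k * B (Suc m) (Suc k) + (Suc m - k) * B (Suc m) k + Suc m * B m k
        \<le> Suc k * (2*(Suc m - Suc k)+5)^(Suc m) + (Suc m - k) * (2*(Suc m - k)+5)^(Suc m) + Suc m * (2*(m-k)+5)^m"
        using 4 by (intro add_mono mult_le_mono2 B_bound) auto
      moreover have "Suc m - Suc k = m - k" "2*(Suc m - k)+5 = 2*(m-k)+7" using 4 by auto
      ultimately have "Suc k * B (Suc m) (Suc k) + (Suc m - k) * B (Suc m) k + Suc m * B m k
        \<le> Suc k * (2*(m-k)+5)^(Suc m) + (Suc m - k) * (2*(m-k)+7)^(Suc m) + Suc m * (2*(m-k)+5)^m"
        by (simp only:)
      moreover have e: "2*(Suc (Suc m) - Suc k)+5 = 2*(m-k)+7" using 4 by auto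
      ultimately show ?thesis unfolding e using I2[of k m] 4 by linarith
    qed
    show ?thesis using l1 l2 v by simp
  qed
qed

definition NF :: "(nat \<Rightarrow> nat) \<Rightarrow> nat \<Rightarrow> nat set" where
  "NF s l = {i \<in> {1..l}. s i \<noteq> i}"

definition T :: "nat \<Rightarrow> nat \<Rightarrow> nat \<Rightarrow> (nat \<Rightarrow> nat) set" where
  "T l n k = {s. s permutes {1..l} \<and> card (NF s l) = n \<and> card (exceedances s l) = k}"

lemma finite_T: "finite (T l n k)"
  by (rule finite_subset[OF _ finite_permutations[of "{1..l}"]]) (auto simp: T_def)

lemma card_fix_NF: "card (fixed_points s l) + card (NF s l) = l"
proof -
  have "fixed_points s l \<union> NF s l = {1..l}" "fixed_points s l \<inter> NF s l = {}"
    by (auto simp: fixed_points_def NF_def)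
  then show ?thesis using card_Un_disjoint[of "fixed_points s l" "NF s l"]
    by (metis card_atLeastAtMost diff_Suc_1 finite_Un finite_atLeastAtMost)
qed

lemma exc_sub_NF: "exceedances s l \<subseteq> NF s l"
  by (auto simp: exceedances_def NF_def)

lemma card_split: "finite A \<Longrightarrow> j \<in> A \<Longrightarrow>
   card {i\<in>A. P i} = card {i\<in>A - {j}. P i} + (if P j then 1 else 0)"
proof -
  assume a: "finite A" "j \<in> A"
  show ?thesis
  proof (cases "P j")
    case True
    then have "{i\<in>A. P i} = insert j {i\<in>A - {j}. P i}" using a by auto
    then show ?thesis using a True by simp
  next
    case False
    then have "{i\<in>A. P i} = {i\<in>A - {j}. P i}" by auto
    then show ?thesis using False by auto
  qed
qed

lemma card_Suc_split: "card {i\<in>{1..Suc l}. P i} = card {i\<in>{1..l}. P i} + (if P (Suc l) then 1 else 0)"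
proof -
  have "{i\<in>{1..Suc l}. P i} = {i\<in>{1..Suc l}. P i}" ..
  have "card {i\<in>{1..Suc l}. P i} = card {i\<in>{1..Suc l} - {Suc l}. P i} + (if P (Suc l) then 1 else 0)"
    by (rule card_split) auto
  moreover have "{i\<in>{1..Suc l} - {Suc l}. P i} = {i\<in>{1..l}. P i}" by auto
  ultimately show ?thesis by simp
qed

lemma step:
  "card (T (Suc l) n k) \<le> card (T l n k)
     + (if 1 \<le> n then k * card (T l (n-1) k) else 0)
     + (if 1 \<le> n \<and> 1 \<le> k then (n-k) * card (T l (n-1) (k-1)) else 0)
     + (if 2 \<le> n \<and> 1 \<le> k then (l-(n-2)) * card (T l (n-2) (k-1)) else 0)"
proof -
  define G where "G = (\<lambda>p::(nat\<Rightarrow>nat)\<times>nat. fst p \<circ> transpose (snd p) (Suc l))"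
  define D1 where "D1 = T l n k \<times> {Suc l}"
  define D2 where "D2 = (if 1 \<le> n then Sigma (T l (n-1) k) (\<lambda>p. exceedances p l) else {})"
  define D3 where "D3 = (if 1 \<le> n \<and> 1 \<le> k then Sigma (T l (n-1) (k-1)) (\<lambda>p. NF p l - exceedances p l) else {})"
  define D4 where "D4 = (if 2 \<le> n \<and> 1 \<le> k then Sigma (T l (n-2) (k-1)) (\<lambda>p. fixed_points p l) else {})"
  have fin: "finite D1" "finite D2" "finite D3" "finite D4"
    by (auto simp: D1_def D2_def D3_def D4_def finite_T fixed_points_def exceedances_def NF_def
        intro!: finite_SigmaI)
  have c1: "card D1 = card (T l n k)" by (simp add: D1_def card_cartesian_product)
  have c2: "card D2 = (if 1 \<le> n then k * card (T l (n-1) k) else 0)"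
  proof (cases "1 \<le> n")
    case True
    have "card D2 = (\<Sum>p\<in>T l (n-1) k. card (exceedances p l))"
      using True by (simp add: D2_def card_SigmaI finite_T exceedances_def)
    also have "\<dots> = (\<Sum>p\<in>T l (n-1) k. k)" by (rule sum.cong) (auto simp: T_def)
    finally show ?thesis using True by simp
  next
    case False
    then have "D2 = {}" unfolding D2_def by (intro if_not_P)
    then show ?thesis using False by auto
  qed
  have c3: "card D3 = (if 1 \<le> n \<and> 1 \<le> k then (n-k) * card (T l (n-1) (k-1)) else 0)"
  proof (cases "1 \<le> n \<and> 1 \<le> k")
    case True
    have "card D3 = (\<Sum>p\<in>T l (n-1) (k-1). card (NF p l - exceedances p l))"
      using True by (simp add: D3_def card_SigmaI finite_T NF_def)
    also have "\<dots> = (\<Sum>p\<in>T l (n-1) (k-1). n-k)"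
    proof (rule sum.cong)
      fix p assume "p \<in> T l (n-1) (k-1)"
      then have "card (NF p l) = n-1" "card (exceedances p l) = k-1" by (auto simp: T_def)
      moreover have "card (NF p l - exceedances p l) = card (NF p l) - card (exceedances p l)"
        by (rule card_Diff_subset) (auto simp: exceedances_def NF_def)
      ultimately show "card (NF p l - exceedances p l) = n-k" using True by simp
    qed simp
    finally show ?thesis using True by simp
  next
    case False
    then have "D3 = {}" unfolding D3_def by (intro if_not_P)
    then show ?thesis using False by auto
  qed
  have c4: "card D4 = (if 2 \<le> n \<and> 1 \<le> k then (l-(n-2)) * card (T l (n-2) (k-1)) else 0)"
  proof (cases "2 \<le> n \<and> 1 \<le> k")
    case True
    have "card D4 = (\<Sum>p\<in>T l (n-2) (k-1). card (fixed_points p l))"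
      using True by (simp add: D4_def card_SigmaI finite_T fixed_points_def)
    also have "\<dots> = (\<Sum>p\<in>T l (n-2) (k-1). l-(n-2))"
    proof (rule sum.cong)
      fix p assume "p \<in> T l (n-2) (k-1)"
      then have "card (NF p l) = n-2" by (auto simp: T_def)
      then show "card (fixed_points p l) = l-(n-2)" using card_fix_NF[of p l] by simp
    qed simp
    finally show ?thesis using True by simp
  next
    case False
    then have "D4 = {}" unfolding D4_def by (intro if_not_P)
    then show ?thesis using False by auto
  qed
  have sub: "T (Suc l) n k \<subseteq> G ` (D1 \<union> D2 \<union> D3 \<union> D4)"
  proof
    fix s assume sT: "s \<in> T (Suc l) n k"
    have sp: "s permutes {1..Suc l}" and sn: "card (NF s (Suc l)) = n"
      and sk: "card (exceedances s (Suc l)) = k" using sT by (auto simp: T_def)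
    define j where "j = inv s (Suc l)"
    have sj: "s j = Suc l" using permutes_inverses(1)[OF sp] by (simp add: j_def)
    have jS: "j \<in> {1..Suc l}"
    proof (rule ccontr)
      assume "j \<notin> {1..Suc l}"
      then have "s j = j" using sp by (simp add: permutes_def)
      then show False using sj \<open>j \<notin> {1..Suc l}\<close> by simp
    qed
    define p where "p = s \<circ> transpose j (Suc l)"
    have Gp: "G (p, j) = s" by (simp add: G_def p_def comp_assoc)
    have pp1: "p permutes {1..Suc l}" unfolding p_def
      by (rule permutes_compose[OF permutes_swap_id sp]) (use jS in auto)
    have pSuc: "p (Suc l) = Suc l" by (simp add: p_def sj)
    have pp: "p permutes {1..l}"
      by (rule permutes_superset[OF pp1]) (use pSuc in \<open>auto simp: le_Suc_eq\<close>)
    show "s \<in> G ` (D1 \<union> D2 \<union> D3 \<union> D4)"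
    proof (cases "j = Suc l")
      case True
      then have "p = s" by (simp add: p_def)
      have "card (NF s l) = n" using sn True sj
        unfolding NF_def card_Suc_split[of l "\<lambda>i. s i \<noteq> i"] by simp
      moreover have "card (exceedances s l) = k" using sk True sj
        unfolding exceedances_def card_Suc_split[of l "\<lambda>i. s i > i"] by simp
      ultimately have "(p, j) \<in> D1" using pp \<open>p = s\<close> True by (simp add: D1_def T_def)
      then show ?thesis using Gp by (metis UnI1 image_eqI)
    next
      case False
      then have jA: "j \<in> {1..l}" using jS by auto
      define a where "a = s (Suc l)"
      have aS: "a \<in> {1..Suc l}" using permutes_in_image[OF sp] by (simp add: a_def)
      have "a \<noteq> Suc l" using sj False permutes_inj[OF sp] unfolding a_def by (metis injD)
      then have aA: "a \<in> {1..l}" using aS by auto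
      have pj: "p j = a" by (simp add: p_def a_def)
      have agree: "\<And>i. i \<in> {1..l} - {j} \<Longrightarrow> p i = s i" by (auto simp: p_def transpose_def)
      define cN where "cN = card {i\<in>{1..l} - {j}. p i \<noteq> i}"
      define cE where "cE = card {i\<in>{1..l} - {j}. p i > i}"
      have eN: "{i\<in>{1..l} - {j}. s i \<noteq> i} = {i\<in>{1..l} - {j}. p i \<noteq> i}" using agree by auto
      have eE: "{i\<in>{1..l} - {j}. s i > i} = {i\<in>{1..l} - {j}. p i > i}" using agree by auto
      have n_eq: "n = cN + 2"
      proof -
        have "n = card {i\<in>{1..l}. s i \<noteq> i} + 1" using sn \<open>a \<noteq> Suc l\<close>
          unfolding NF_def card_Suc_split[of l "\<lambda>i. s i \<noteq> i"] a_def by simp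
        also have "card {i\<in>{1..l}. s i \<noteq> i} = cN + 1"
          using card_split[OF _ jA, of "\<lambda>i. s i \<noteq> i"] sj False eN by (simp add: cN_def)
        finally show ?thesis by simp
      qed
      have k_eq: "k = cE + 1"
      proof -
        have "k = card {i\<in>{1..l}. s i > i}" using sk aA
          unfolding exceedances_def card_Suc_split[of l "\<lambda>i. s i > i"] a_def by simp
        also have "\<dots> = cE + 1"
          using card_split[OF _ jA, of "\<lambda>i. s i > i"] sj jA eE by (simp add: cE_def)
        finally show ?thesis .
      qed
      have pN: "card (NF p l) = cN + (if a \<noteq> j then 1 else 0)"
        unfolding NF_def using card_split[OF _ jA, of "\<lambda>i. p i \<noteq> i"] pj by (simp add: cN_def)
      have pE: "card (exceedances p l) = cE + (if a > j then 1 else 0)"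
        unfolding exceedances_def using card_split[OF _ jA, of "\<lambda>i. p i > i"] pj by (simp add: cE_def)
      consider "a = j" | "a > j" | "a < j" by linarith
      then show ?thesis
      proof cases
        case 1
        then have "p \<in> T l (n-2) (k-1)" using pp pN pE n_eq k_eq by (simp add: T_def)
        moreover have "j \<in> fixed_points p l" using 1 pj jA by (simp add: fixed_points_def)
        ultimately have "(p, j) \<in> D4" using n_eq k_eq by (simp add: D4_def)
        then show ?thesis using Gp by (metis UnI2 image_eqI)
      next
        case 2
        then have "p \<in> T l (n-1) k" using pp pN pE n_eq k_eq by (simp add: T_def)
        moreover have "j \<in> exceedances p l" using 2 pj jA by (simp add: exceedances_def)
        ultimately have "(p, j) \<in> D2" using n_eq k_eq by (simp add: D2_def)
        then show ?thesis using Gp by (metis UnI1 UnI2 image_eqI)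
      next
        case 3
        then have "p \<in> T l (n-1) (k-1)" using pp pN pE n_eq k_eq by (simp add: T_def)
        moreover have "j \<in> NF p l - exceedances p l" using 3 pj jA by (simp add: exceedances_def NF_def)
        ultimately have "(p, j) \<in> D3" using n_eq k_eq by (simp add: D3_def)
        then show ?thesis using Gp by (metis UnI1 UnI2 image_eqI)
      qed
    qed
  qed
  have "card (T (Suc l) n k) \<le> card (G ` (D1 \<union> D2 \<union> D3 \<union> D4))"
    by (rule card_mono[OF _ sub]) (use fin in simp)
  also have "\<dots> \<le> card (D1 \<union> D2 \<union> D3 \<union> D4)" by (rule card_image_le) (use fin in simp)
  also have "\<dots> \<le> card D1 + card D2 + card D3 + card D4"
    by (meson add_le_mono card_Un_le le_trans order_refl)
  finally show ?thesis using c1 c2 c3 c4 by simp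
qed

lemma binom_aux: "(l - m) * (l choose m) = Suc m * (l choose Suc m)"
proof (cases l)
  case 0 then show ?thesis by simp
next
  case (Suc l')
  show ?thesis unfolding Suc binomial_absorb_comp Suc_times_binomial by simp
qed

lemma rec_ok:
  "(l choose n) * B n k
   + (if 1 \<le> n then k * ((l choose (n-1)) * B (n-1) k) else 0)
   + (if 1 \<le> n \<and> 1 \<le> k then (n-k) * ((l choose (n-1)) * B (n-1) (k-1)) else 0)
   + (if 2 \<le> n \<and> 1 \<le> k then (l-(n-2)) * ((l choose (n-2)) * B (n-2) (k-1)) else 0)
   \<le> (Suc l choose n) * B n k"
proof -
  consider "n = 0" | "n = 1" | m where "n = Suc (Suc m)" "k = 0" | m k' where "n = Suc (Suc m)" "k = Suc k'"
    by (metis not0_implies_Suc One_nat_def)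
  then show ?thesis
  proof cases
    case 1 then show ?thesis by simp
  next
    case 2
    have "B 1 k = 0" by (simp add: B_def)
    moreover have "k * B 0 k = 0" by (simp add: B_def)
    ultimately show ?thesis using 2 by simp
  next
    case 3 then show ?thesis by (simp add: B_def)
  next
    case 4
    have st: "Suc k' * B (Suc m) (Suc k') + (Suc m - k') * B (Suc m) k' + Suc m * B m k' \<le> B (Suc (Suc m)) (Suc k')"
      by (rule star_x)
    have "(l choose n) * B n k
      + (if 1 \<le> n then k * ((l choose (n-1)) * B (n-1) k) else 0)
      + (if 1 \<le> n \<and> 1 \<le> k then (n-k) * ((l choose (n-1)) * B (n-1) (k-1)) else 0)
      + (if 2 \<le> n \<and> 1 \<le> k then (l-(n-2)) * ((l choose (n-2)) * B (n-2) (k-1)) else 0)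
      = (l choose Suc (Suc m)) * B n k + Suc k' * ((l choose Suc m) * B (Suc m) (Suc k'))
        + (Suc m - k') * ((l choose Suc m) * B (Suc m) k') + ((l - m) * (l choose m)) * B m k'"
      using 4 by (simp add: algebra_simps)
    also have "\<dots> = (l choose Suc (Suc m)) * B n k + (l choose Suc m) *
       (Suc k' * B (Suc m) (Suc k') + (Suc m - k') * B (Suc m) k' + Suc m * B m k')"
      unfolding binom_aux by (simp add: algebra_simps)
    also have "\<dots> \<le> (l choose Suc (Suc m)) * B n k + (l choose Suc m) * B n k"
      using st 4 by (intro add_mono mult_le_mono2) auto
    also have "\<dots> = (Suc l choose n) * B n k" using 4 by (simp add: algebra_simps)
    finally show ?thesis .
  qed
qed

lemma main_bound: "card (T l n k) \<le> (l choose n) * B n k"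
proof (induction l arbitrary: n k)
  case 0
  have sub: "T 0 n k \<subseteq> (if n = 0 \<and> k = 0 then {id} else {})"
    by (auto simp: T_def NF_def exceedances_def)
  show ?case
  proof (cases "n = 0 \<and> k = 0")
    case True
    have "card (T 0 n k) \<le> card {id::nat\<Rightarrow>nat}" using sub True by (intro card_mono) auto
    then show ?thesis using True by (simp add: B_def)
  next
    case False
    then have "T 0 n k = {}" using sub by auto
    then show ?thesis by simp
  qed
next
  case (Suc l)
  have "card (T (Suc l) n k) \<le> card (T l n k)
     + (if 1 \<le> n then k * card (T l (n-1) k) else 0)
     + (if 1 \<le> n \<and> 1 \<le> k then (n-k) * card (T l (n-1) (k-1)) else 0)
     + (if 2 \<le> n \<and> 1 \<le> k then (l-(n-2)) * card (T l (n-2) (k-1)) else 0)" by (rule step)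
  also have "\<dots> \<le> (l choose n) * B n k
   + (if 1 \<le> n then k * ((l choose (n-1)) * B (n-1) k) else 0)
   + (if 1 \<le> n \<and> 1 \<le> k then (n-k) * ((l choose (n-1)) * B (n-1) (k-1)) else 0)
   + (if 2 \<le> n \<and> 1 \<le> k then (l-(n-2)) * ((l choose (n-2)) * B (n-2) (k-1)) else 0)"
    using Suc.IH by (intro add_mono) (auto intro: mult_le_mono2)
  also have "\<dots> \<le> (Suc l choose n) * B n k" by (rule rec_ok)
  finally show ?case .
qed

lemma B_theta: assumes "2 \<le> n" "1 \<le> k" "k \<le> n - 1" shows "B n k \<le> theta n k"
  using assms by (auto simp: B_def theta_def min_le_iff_disj left_diff_distrib')

theorem mainTheorem8:
  fixes l n k :: nat
  assumes "2 \<le> n" and "n \<le> l" and "1 \<le> k" and "k \<le> n - 1"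
  shows "card (S_set l n k) \<le> (l choose n) * theta n k"
proof -
  have "S_set l n k = T l n k"
  proof -
    have "\<And>s. (card (fixed_points s l) = l - n) = (card (NF s l) = n)"
      using card_fix_NF assms(2) by (metis add_diff_cancel_left' le_add_diff_inverse2 add.commute)
    then show ?thesis by (simp add: S_set_def T_def)
  qed
  then have "card (S_set l n k) \<le> (l choose n) * B n k" using main_bound by simp
  also have "\<dots> \<le> (l choose n) * theta n k" using B_theta[OF assms(1,3,4)] by (rule mult_le_mono2)
  finally show ?thesis .
qed

end
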